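(* Let $k\ge 3$ be an integer and $F$ a field admitting a primitive $(k-1)$-th root of unity with $\mathrm{char}(F)\nmid k$. Let $X$ be a finite poset, $B$ an associative $F$-algebra, and $\varphi:I(X,F)\to B$ an $F$-linear map with $\varphi(P_k(I(X,F)))\subseteq P_k(B)$. Put $u=\varphi(\delta)$. Then $u$ commutes with every element of $\varphi(I(X,F))$, $\varphi(I(X,F))\subseteq u^{k-1}Bu^{k-1}$, and $\varphi$, regarded as a map $I(X,F)\to(u^{k-1}Bu^{k-1},\bullet_u)$, is a Jordan homomorphism.
   Context: $I(X,F)$ is the incidence algebra of the locally finite poset $X$ over $F$ (functions $f:X\times X\to F$ vanishing unless $x\le y$, with product $(fg)(x,y)=\sum_{x\le z\le y}f(x,z)g(z,y)$), with identity $\delta$ ($\delta(x,y)=1$ if $x=y$, $0$ otherwise). $P_k(A)=\{a: a^k=a\}$. For a $k$-potent $u$ of an associative algebra $B$, $u^{k-1}$ is idempotent and $u^{k-1}Bu^{k-1}$ is an associative algebra with the product $a\bullet_u b=au^{k-2}b$ (with identity $u$). A Jordan homomorphism $\varphi:A\to C$ of associative algebras is a linear map with $\varphi(a^2)=\varphi(a)^2$ and $\varphi(aba)=\varphi(a)\varphi(b)\varphi(a)$ for all $a,b$ (products taken in the respective algebras). *)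

theory Defs
  imports Complex_Main
begin

definition incidence_alg :: "('x::order \<Rightarrow> 'x \<Rightarrow> 'f::field) set" where
  "incidence_alg = {f. \<forall>x y. \<not> x \<le> y \<longrightarrow> f x y = 0}"

definition inc_mult :: "('x::{order,finite} \<Rightarrow> 'x \<Rightarrow> 'f::field) \<Rightarrow> ('x \<Rightarrow> 'x \<Rightarrow> 'f) \<Rightarrow> ('x \<Rightarrow> 'x \<Rightarrow> 'f)" where
  "inc_mult f g = (\<lambda>x y. \<Sum>z\<in>{z. x \<le> z \<and> z \<le> y}. f x z * g z y)"

definition inc_delta :: "'x::order \<Rightarrow> 'x \<Rightarrow> 'f::field" where
  "inc_delta = (\<lambda>x y. if x = y then 1 else 0)"

definition inc_smult :: "'f::field \<Rightarrow> ('x \<Rightarrow> 'x \<Rightarrow> 'f) \<Rightarrow> ('x \<Rightarrow> 'x \<Rightarrow> 'f)" where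
  "inc_smult c f = (\<lambda>x y. c * f x y)"

definition inc_add :: "('x \<Rightarrow> 'x \<Rightarrow> 'f::field) \<Rightarrow> ('x \<Rightarrow> 'x \<Rightarrow> 'f) \<Rightarrow> ('x \<Rightarrow> 'x \<Rightarrow> 'f)" where
  "inc_add f g = (\<lambda>x y. f x y + g x y)"

primrec inc_pow :: "('x::{order,finite} \<Rightarrow> 'x \<Rightarrow> 'f::field) \<Rightarrow> nat \<Rightarrow> ('x \<Rightarrow> 'x \<Rightarrow> 'f)" where
  "inc_pow f 0 = inc_delta"
| "inc_pow f (Suc n) = inc_mult f (inc_pow f n)"

text \<open>Positive powers in a (possibly non-unital) associative ring;
  bpow a n = a^n for n \<ge> 1 (the value at n = 0 is irrelevant and set to 0).\<close>

fun bpow :: "'b::ring \<Rightarrow> nat \<Rightarrow> 'b" where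
  "bpow a 0 = 0"
| "bpow a (Suc 0) = a"
| "bpow a (Suc (Suc n)) = a * bpow a (Suc n)"

definition F_algebra :: "('f::field \<Rightarrow> 'b::ring \<Rightarrow> 'b) \<Rightarrow> bool" where
  "F_algebra sm \<longleftrightarrow> vector_space sm \<and>
     (\<forall>c x y. sm c (x * y) = sm c x * y \<and> sm c (x * y) = x * sm c y)"

definition Pk_inc :: "nat \<Rightarrow> ('x::{order,finite} \<Rightarrow> 'x \<Rightarrow> 'f::field) set" where
  "Pk_inc k = {a \<in> incidence_alg. inc_pow a k = a}"

definition Pk :: "nat \<Rightarrow> 'b::ring set" where
  "Pk k = {a. bpow a k = a}"

definition primitive_root_of_unity :: "nat \<Rightarrow> 'f::field \<Rightarrow> bool" where
  "primitive_root_of_unity n w \<longleftrightarrow> w ^ n = 1 \<and> (\<forall>j. 0 < j \<and> j < n \<longrightarrow> w ^ j \<noteq> 1)"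

end

theory Submission
  imports Defs "HOL-Computational_Algebra.Primes"
begin

lemma bpow_1[simp]: "bpow a (Suc 0) = a" by simp

lemma bpow_SucL: "m \<ge> 1 \<Longrightarrow> bpow a (Suc m) = a * bpow a m"
  by (cases m) auto

lemma bpow_SucR: "bpow a (Suc m) = (if m = 0 then a else bpow a m * a)"
proof (induction m)
  case 0 then show ?case by simp
next
  case (Suc m)
  show ?case
  proof (cases "m = 0")
    case True then show ?thesis by simp
  next
    case False
    have "bpow a (Suc (Suc m)) = a * bpow a (Suc m)" by simp
    also have "\<dots> = a * (bpow a m * a)" using Suc.IH False by simp
    also have "\<dots> = (a * bpow a m) * a" by (simp add: mult.assoc)
    also have "\<dots> = bpow a (Suc m) * a" using False by (simp add: bpow_SucL)
    finally show ?thesis by simp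
  qed
qed

lemma bpow_SucR': "m \<ge> 1 \<Longrightarrow> bpow a (Suc m) = bpow a m * a"
  by (simp add: bpow_SucR)

lemma bpow_add: "i \<ge> 1 \<Longrightarrow> j \<ge> 1 \<Longrightarrow> bpow a (i + j) = bpow a i * bpow a j"
proof (induction i rule: nat_induct_at_least)
  case base then show ?case by (cases j) auto
next
  case (Suc i)
  then have "bpow a (Suc i + j) = a * bpow a (i + j)" by (simp add: bpow_SucL)
  also have "\<dots> = a * bpow a i * bpow a j" using Suc by (simp add: mult.assoc)
  also have "\<dots> = bpow a (Suc i) * bpow a j" using Suc by (simp add: bpow_SucL)
  finally show ?case .
qed

lemma bpow_shift: "a * c = c * b \<Longrightarrow> bpow a m * c = c * bpow b m"
proof (induction m)
  case 0 then show ?case by simp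
next
  case (Suc m)
  show ?case
  proof (cases "m = 0")
    case True then show ?thesis using Suc by simp
  next
    case False
    have "bpow a (Suc m) * c = a * (bpow a m * c)" using False by (simp add: bpow_SucL mult.assoc)
    also have "\<dots> = (a * c) * bpow b m" using Suc by (simp add: mult.assoc[symmetric])
    also have "\<dots> = c * bpow b (Suc m)" using Suc False by (simp add: bpow_SucL mult.assoc[symmetric])
    finally show ?thesis .
  qed
qed

lemma bpow_SucL_if: "bpow a (Suc m) = (if m = 0 then a else a * bpow a m)"
  by (cases m) auto

lemma bpow_zeroL: "a * b = 0 \<Longrightarrow> bpow a m * b = 0"
  by (cases m) (auto simp: bpow_SucR mult.assoc)

lemma bpow_zeroR: "b * a = 0 \<Longrightarrow> b * bpow a m = 0"
  by (cases m) (auto simp: bpow_SucL_if mult.assoc[symmetric])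

lemma bpow_period: assumes "bpow q (Suc n) = q" "n \<ge> 1" "j \<ge> 1"
  shows "bpow q (j + n) = bpow q j"
proof (cases "j = 1")
  case True then show ?thesis using assms by simp
next
  case False
  then obtain i where i: "j = Suc i" "i \<ge> 1" using assms(3) by (cases j) auto
  have "bpow q (j + n) = bpow q (i + Suc n)" using i by simp
  also have "\<dots> = bpow q i * bpow q (Suc n)" using i by (intro bpow_add) auto
  also have "\<dots> = bpow q i * q" using assms(1) by simp
  also have "\<dots> = bpow q j" using i by (simp add: bpow_SucR')
  finally show ?thesis .
qed

lemma root_n_nonzero:
  fixes w :: "'f::field"
  assumes pr: "primitive_root_of_unity n w" and n1: "n \<ge> 1"
  shows "of_nat n \<noteq> (0::'f)"
proof
  assume n0: "of_nat n = (0::'f)"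
  have ppos: "CHAR('f) > 0" using n0 n1 by (subst CHAR_pos_iff) (auto intro!: exI[of _ n])
  have prp: "prime CHAR('f)" using prime_CHAR_semidom[OF ppos] .
  have "CHAR('f) dvd n" using n0 by (simp add: of_nat_eq_0_iff_char_dvd)
  then obtain m where nm: "n = CHAR('f) * m" by (auto elim: dvdE)
  have p2: "CHAR('f) \<ge> 2" using prp prime_ge_2_nat by blast
  have m0: "m > 0" using nm n1 by (cases m) auto
  have "1 * m < CHAR('f) * m" using p2 m0 by (intro mult_strict_right_mono) auto
  then have mn: "m < n" using nm by simp
  have "(w ^ m + (- 1)) ^ CHAR('f) = (w ^ m) ^ CHAR('f) + (- 1) ^ CHAR('f)"
    by (rule freshmans_dream[OF prp refl])
  also have "(- 1 :: 'f) ^ CHAR('f) = - (1 ^ CHAR('f))"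
    by (rule minus_power_prime_CHAR[OF refl prp])
  also have "(w ^ m) ^ CHAR('f) = w ^ n" by (simp add: nm power_mult[symmetric] mult.commute)
  also have "w ^ n = 1" using pr by (simp add: primitive_root_of_unity_def)
  finally have "(w ^ m + (- 1)) ^ CHAR('f) = 0" by simp
  then have "w ^ m = 1" by simp
  then show False using pr m0 mn by (auto simp: primitive_root_of_unity_def)
qed

lemma two_nonzero:
  assumes "of_nat k \<noteq> (0::'f::field)" "of_nat (k - 1) \<noteq> (0::'f)" "k \<ge> 1"
  shows "(2::'f) \<noteq> 0"
proof
  assume two: "(2::'f) = 0"
  have ev: "of_nat (2 * r) = (0::'f)" for r by (simp add: two)
  show False
  proof (cases "even k")
    case True then obtain r where "k = 2 * r" by auto
    then show False using assms(1) ev by simp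
  next
    case False then have "even (k - 1)" using assms(3) by simp
    then obtain r where "k - 1 = 2 * r" by (rule evenE)
    then show False using assms(2) ev by metis
  qed
qed

lemma root_sum:
  fixes w :: "'f::field"
  assumes pr: "primitive_root_of_unity n w" and n1: "n \<ge> 1"
  shows "(\<Sum>j<n. (w ^ s) ^ j) = (if n dvd s then of_nat n else 0)"
proof (cases "n dvd s")
  case True
  then obtain r where "s = n * r" by auto
  then have "w ^ s = 1" using pr by (simp add: power_mult primitive_root_of_unity_def)
  then show ?thesis using True by simp
next
  case False
  have wn: "w ^ n = 1" using pr by (simp add: primitive_root_of_unity_def)
  have "w ^ s = w ^ (n * (s div n) + s mod n)" by simp
  also have "\<dots> = (w ^ n) ^ (s div n) * w ^ (s mod n)" by (simp only: power_add power_mult)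
  finally have "w ^ s = w ^ (s mod n)" using wn by simp
  moreover have "s mod n \<noteq> 0" using False by (simp add: dvd_eq_mod_eq_0)
  then have "s mod n > 0" by simp
  moreover have "s mod n < n" using n1 by simp
  ultimately have ne: "w ^ s \<noteq> 1" using pr by (auto simp: primitive_root_of_unity_def)
  have "(w ^ s) ^ n = 1" by (simp add: wn power_mult[symmetric] mult.commute power_mult)
  then show ?thesis using False geometric_sum[OF ne, of n] by simp
qed

fun Wd :: "'b::ring \<Rightarrow> 'b \<Rightarrow> nat \<Rightarrow> nat \<Rightarrow> 'b" where
  "Wd p q i 0 = 0"
| "Wd p q i (Suc 0) = (if i = 0 then q else if i = 1 then p else 0)"
| "Wd p q i (Suc (Suc m)) = (if i = 0 then q * Wd p q 0 (Suc m)
      else p * Wd p q (i - 1) (Suc m) + q * Wd p q i (Suc m))"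

lemma Wd_big: "i > m \<Longrightarrow> Wd p q i m = 0"
proof (induction m arbitrary: i)
  case 0 then show ?case by simp
next
  case (Suc m)
  show ?case
  proof (cases m)
    case 0 then show ?thesis using Suc.prems by simp
  next
    case (Suc m')
    have a: "Wd p q (i - 1) m = 0" using Suc.IH[of "i - 1"] Suc.prems by simp
    have b: "Wd p q i m = 0" using Suc.IH[of i] Suc.prems by simp
    show ?thesis using a b Suc Suc.prems by simp
  qed
qed

lemma Wd_0: "Wd p q 0 m = bpow q m"
proof (induction m)
  case (Suc m) then show ?case by (cases m) auto
qed simp

locale balg =
  fixes sm :: "'f::field \<Rightarrow> 'b::ring \<Rightarrow> 'b"
  assumes Falg: "F_algebra sm"
begin

sublocale vs: vector_space sm using Falg by (simp add: F_algebra_def)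

lemma sm_multL: "sm c x * y = sm c (x * y)" using Falg unfolding F_algebra_def by metis
lemma sm_multR: "x * sm c y = sm c (x * y)" using Falg unfolding F_algebra_def by metis

lemma expand: "m \<ge> 1 \<Longrightarrow> bpow (sm t p + q) m = (\<Sum>i\<le>m. sm (t ^ i) (Wd p q i m))"
proof (induction m rule: nat_induct_at_least)
  case base
  show ?case by (simp add: add.commute)
next
  case (Suc m)
  then obtain m' where m': "m = Suc m'" by (cases m) auto
  define f where "f i = sm (t ^ i) (q * Wd p q i m)" for i
  have f0: "(\<Sum>i\<le>m. f i) = f 0 + (\<Sum>i\<le>m. f (Suc i))"
  proof -
    have "(\<Sum>i\<le>Suc m. f i) = f 0 + (\<Sum>i\<le>m. f (Suc i))" by (rule sum.atMost_Suc_shift)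
    moreover have "(\<Sum>i\<le>Suc m. f i) = (\<Sum>i\<le>m. f i)"
      by (simp add: f_def Wd_big)
    ultimately show ?thesis by simp
  qed
  have "bpow (sm t p + q) (Suc m) = (sm t p + q) * bpow (sm t p + q) m"
    using Suc by (simp add: bpow_SucL)
  also have "\<dots> = (\<Sum>i\<le>m. sm (t ^ Suc i) (p * Wd p q i m)) + (\<Sum>i\<le>m. f i)"
    by (simp add: Suc.IH distrib_right sum_distrib_left sm_multL sm_multR f_def
        sum.distrib vs.scale_right_distrib mult.commute)
  also have "\<dots> = (\<Sum>i\<le>m. sm (t ^ Suc i) (p * Wd p q i m)) + f 0 + (\<Sum>i\<le>m. f (Suc i))"
    by (simp add: f0 add.assoc)
  also have "\<dots> = sm (t ^ 0) (Wd p q 0 (Suc m)) + (\<Sum>i\<le>m. sm (t ^ Suc i) (Wd p q (Suc i) (Suc m)))"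
    by (simp add: m' f_def sum.distrib vs.scale_right_distrib)
  also have "\<dots> = (\<Sum>i\<le>Suc m. sm (t ^ i) (Wd p q i (Suc m)))"
    by (rule sum.atMost_Suc_shift[symmetric])
  finally show ?case .
qed

lemma Wd1_rec: "m \<ge> 1 \<Longrightarrow> Wd p q 1 (Suc m) = p * bpow q m + q * Wd p q 1 m"
  by (cases m) (auto simp: Wd_0)

lemma KL:
  fixes p q :: 'b
  assumes k3: "k \<ge> 3" and kne: "of_nat k \<noteq> (0::'f)"
    and qk: "bpow q k = q" and W0: "Wd p q 1 k = 0"
  shows "p * q = 0 \<and> q * p = 0"
proof -
  define n where "n = k - 1"
  have n2: "n \<ge> 2" and kn: "k = Suc n" using k3 by (auto simp: n_def)
  have qn: "bpow q (Suc n) = q" using qk kn by simp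
  have qper: "j \<ge> 1 \<Longrightarrow> bpow q (j + n) = bpow q j" for j
    using bpow_period[OF qn] n2 by simp
  define Q where "Q j = bpow q (j + n)" for j
  define F where "F = bpow q n"
  have QQ: "Q i * Q j = Q (i + j)" for i j
  proof -
    have "Q i * Q j = bpow q (i + n + (j + n))" unfolding Q_def using n2 by (intro bpow_add[symmetric]) auto
    also have "\<dots> = bpow q ((i + j + n) + n)" by (simp add: algebra_simps)
    also have "\<dots> = Q (i + j)" unfolding Q_def using n2 by (intro qper) auto
    finally show ?thesis .
  qed
  have Q0: "Q 0 = F" by (simp add: Q_def F_def)
  have Q1: "Q 1 = q" using qn by (simp add: Q_def)
  have Qn: "Q n = F" unfolding Q_def F_def using n2 by (intro qper) auto
  have Qm: "m \<ge> 1 \<Longrightarrow> Q m = bpow q m" for m by (simp add: Q_def qper)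
  have FF: "F * F = F" using QQ[of 0 0] Q0 by simp
  have FQ: "F * Q j = Q j" "Q j * F = Q j" for j using QQ[of 0 j] QQ[of j 0] Q0 by auto
  have Fq: "F * q = q" "q * F = q" using FQ[of 1] Q1 by auto
  have qQ: "q * Q j = Q (Suc j)" for j using QQ[of 1 j] Q1 by simp
  define x where "x = F * p * F"
  have Fx: "F * x = x" "x * F = x" unfolding x_def using FF by (simp_all add: mult.assoc[symmetric])
    (simp add: mult.assoc)
  define U where "U m = F * Wd p q 1 m * F" for m
  have Urec: "U (Suc m) = x * Q m + q * U m" if "m \<ge> 1" for m
  proof -
    have "U (Suc m) = F * p * bpow q m * F + F * q * Wd p q 1 m * F"
      unfolding U_def Wd1_rec[OF that] by (simp add: algebra_simps)
    also have "F * p * bpow q m * F = x * Q m"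
      unfolding x_def using Qm[OF that] FQ[of m] by (simp add: mult.assoc)
    also have "F * q * Wd p q 1 m * F = q * U m"
      unfolding U_def using Fq by (metis mult.assoc)
    finally show ?thesis .
  qed
  have Usum: "U m = (\<Sum>j<m. Q j * x * Q (m - 1 - j))" if "m \<ge> 1" for m
    using that
  proof (induction m rule: nat_induct_at_least)
    case base
    show ?case using Fx Q0 by (simp add: U_def x_def)
  next
    case (Suc m)
    have "U (Suc m) = x * Q m + q * U m" using Urec Suc by simp
    also have "\<dots> = Q 0 * x * Q (Suc m - 1 - 0) + (\<Sum>j<m. Q (Suc j) * x * Q (Suc m - 1 - Suc j))"
      using Suc.IH Q0 Fx qQ by (simp add: sum_distrib_left mult.assoc[symmetric])
    also have "\<dots> = (\<Sum>j<Suc m. Q j * x * Q (Suc m - 1 - j))"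
      by (rule sum.lessThan_Suc_shift[symmetric])
    finally show ?case .
  qed
  define g where "g j = Q j * x * Q (n - j)" for j
  define V where "V = (\<Sum>j<n. g j)"
  have g0: "g 0 = x" and gn: "g n = x" using Fx Q0 Qn by (simp_all add: g_def mult.assoc)
  have Uk: "U k = 0" using W0 by (simp add: U_def)
  have "U k = V + x" unfolding kn V_def using Usum[of "Suc n"] gn by (simp add: g_def)
  then have xV: "x + V = 0" using Uk by (simp add: add.commute)
  have gsh: "(\<Sum>j<n. g (Suc j)) = V"
  proof -
    have "(\<Sum>j<Suc n. g j) = g 0 + (\<Sum>j<n. g (Suc j))" by (rule sum.lessThan_Suc_shift)
    moreover have "(\<Sum>j<Suc n. g j) = V + g n" by (simp add: V_def)
    ultimately show ?thesis using g0 gn by (simp add: add.commute)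
  qed
  have cV: "q * V * Q (n - 1) = V"
  proof -
    have "q * V * Q (n - 1) = (\<Sum>j<n. Q 1 * g j * Q (n - 1))"
      unfolding Q1 by (simp add: V_def sum_distrib_left sum_distrib_right)
    also have "\<dots> = (\<Sum>j<n. g (Suc j))"
    proof (rule sum.cong[OF refl])
      fix j assume "j \<in> {..<n}"
      then have jn: "j < n" by simp
      have "Q 1 * g j * Q (n - 1) = Q (1 + j) * x * Q ((n - Suc j) + n)"
        unfolding g_def using QQ jn by (simp add: mult.assoc[symmetric]) (simp add: mult.assoc QQ)
      also have "Q ((n - Suc j) + n) = Q (n - Suc j)"
        unfolding Q_def using qper n2 by simp
      finally show "Q 1 * g j * Q (n - 1) = g (Suc j)" by (simp add: g_def)
    qed
    finally show ?thesis using gsh by simp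
  qed
  have cx: "q * x * Q (n - 1) = x"
  proof -
    have "q * (x + V) * Q (n - 1) = 0" using xV by simp
    then have "q * x * Q (n - 1) + V = 0" using cV by (simp add: algebra_simps)
    then show ?thesis using xV by (metis add.commute add_left_cancel)
  qed
  have comm: "q * x = x * q"
  proof -
    have "x * q = (q * x * Q (n - 1)) * q" using cx by simp
    also have "\<dots> = q * x * (Q (n - 1) * Q 1)" unfolding Q1 by (simp add: mult.assoc)
    finally have "x * q = q * x * (Q (n - 1) * Q 1)" .
    also have "Q (n - 1) * Q 1 = F" using QQ[of "n - 1" 1] n2 Qn by simp
    finally show ?thesis using Fx by (simp add: mult.assoc)
  qed
  have Qcomm: "Q j * x = x * Q j" for j unfolding Q_def
    using bpow_shift[of q x q] comm by simp
  have gx: "j < n \<Longrightarrow> g j = x" for j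
    unfolding g_def using Qcomm QQ[of j "n - j"] Qn Fx by (simp add: mult.assoc)
  have "V = (\<Sum>j<n. x)" unfolding V_def using gx by simp
  also have "\<dots> = sm (of_nat n) x" by (simp add: vs.sum_constant_scale)
  finally have "sm 1 x + sm (of_nat n) x = 0" using xV by simp
  moreover have "sm (of_nat k) x = sm 1 x + sm (of_nat n) x"
    unfolding kn of_nat_Suc by (simp add: vs.scale_left_distrib)
  ultimately have "sm (of_nat k) x = 0" by simp
  then have x0: "x = 0" using kne by simp
  have qpq: "q * p * bpow q j = 0" if "j \<ge> 1" for j
  proof -
    have "q * p * bpow q j = (q * F) * p * (F * bpow q j)"
      using Fq FQ[of j] Qm[OF that] by simp
    also have "\<dots> = q * (F * p * F) * bpow q j" by (simp add: mult.assoc)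
    finally have "q * p * bpow q j = q * (F * p * F) * bpow q j" .
    then show ?thesis using x0 by (simp add: x_def)
  qed
  have Tform: "Wd p q 1 m = p * bpow q (m - 1) + bpow q (m - 1) * p" if "m \<ge> 2" for m
    using that
  proof (induction m rule: nat_induct_at_least)
    case base show ?case by (simp add: numeral_2_eq_2)
  next
    case (Suc m)
    have e: "Wd p q 1 (Suc m) = p * bpow q m + q * Wd p q 1 m"
      using Suc by (intro Wd1_rec) auto
    have "Wd p q 1 (Suc m) = p * bpow q m + q * (p * bpow q (m - 1) + bpow q (m - 1) * p)"
      unfolding e Suc.IH ..
    also have "\<dots> = p * bpow q m + q * p * bpow q (m - 1) + q * bpow q (m - 1) * p"
      by (simp add: algebra_simps)
    also have "q * p * bpow q (m - 1) = 0" using qpq Suc by simp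
    also have "q * bpow q (m - 1) = bpow q m" using bpow_SucL[of "m - 1" q] Suc by simp
    finally show ?case by simp
  qed
  have "p * F + F * p = 0" using Tform[of k] W0 k3 by (simp add: F_def n_def)
  then have "F * (p * F + F * p) = 0" by simp
  then have "x + F * p = 0" using FF by (simp add: x_def distrib_left mult.assoc[symmetric])
  then have Fp: "F * p = 0" using x0 by simp
  then have pF: "p * F = 0" using \<open>p * F + F * p = 0\<close> by simp
  have "p * q = 0" using pF Fq by (metis mult.assoc mult_zero_left)
  moreover have "q * p = 0" using Fp Fq by (metis mult.assoc mult_zero_right)
  ultimately show ?thesis by simp
qed

end

lemma Wd_diag: "m \<ge> 1 \<Longrightarrow> Wd p q m m = bpow p m"
proof (induction m rule: nat_induct_at_least)
  case base then show ?case by simp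
next
  case (Suc m)
  then obtain m' where m': "m = Suc m'" by (cases m) auto
  show ?case using Suc.IH by (simp add: m' Wd_big)
qed

lemma nondvd_aux:
  assumes "n \<ge> 2" "i \<le> Suc n" "i \<noteq> 1" "i \<noteq> Suc n"
  shows "\<not> n dvd (n - 1 + i)"
proof (cases "i = 0")
  case True then show ?thesis using assms by (auto dest: dvd_imp_le)
next
  case False
  then have e: "n - 1 + i = n + (i - 1)" and "0 < i - 1" "i - 1 < n" using assms by auto
  then have "\<not> n dvd (i - 1)" by (auto dest: dvd_imp_le)
  then show ?thesis unfolding e using dvd_add_right_iff[OF dvd_refl[of n], of "i - 1"] by simp
qed

context balg begin

lemma S1_zero:
  fixes p q :: 'b and w :: 'f
  assumes k3: "k \<ge> 3" and pr: "primitive_root_of_unity (k - 1) w"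
    and pk: "bpow p k = p"
    and all: "\<forall>j<k-1. bpow (sm (w ^ j) p + q) k = sm (w ^ j) p + q"
  shows "Wd p q 1 k = 0"
proof -
  define n where "n = k - 1"
  have n2: "n \<ge> 2" and kn: "k = Suc n" using k3 by (auto simp: n_def)
  have nz: "of_nat n \<noteq> (0::'f)" using root_n_nonzero[of n w] pr n2 by (simp add: n_def)
  have wn: "w ^ n = 1" using pr by (simp add: primitive_root_of_unity_def n_def)
  have eq: "(\<Sum>i\<le>k. sm ((w ^ (n - 1 + i)) ^ j) (Wd p q i k)) = p + sm ((w ^ (n - 1)) ^ j) q"
    if "j < n" for j
  proof -
    have "bpow (sm (w ^ j) p + q) k = (\<Sum>i\<le>k. sm ((w ^ j) ^ i) (Wd p q i k))"
      using k3 by (intro expand) auto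
    then have e1: "(\<Sum>i\<le>k. sm ((w ^ j) ^ i) (Wd p q i k)) = sm (w ^ j) p + q"
      using all that by (simp add: n_def)
    have "(\<Sum>i\<le>k. sm ((w ^ (n - 1 + i)) ^ j) (Wd p q i k))
        = sm ((w ^ j) ^ (n - 1)) (\<Sum>i\<le>k. sm ((w ^ j) ^ i) (Wd p q i k))"
    proof -
      have sw: "(w ^ a) ^ b = (w ^ b) ^ a" for a b by (simp add: power_mult[symmetric] mult.commute)
      have pw: "(w ^ (n - 1 + i)) ^ j = (w ^ j) ^ (n - 1) * (w ^ j) ^ i" for i
        by (simp add: power_add power_mult_distrib sw)
      show ?thesis unfolding pw by (simp add: vs.scale_sum_right)
    qed
    also have "\<dots> = sm ((w ^ j) ^ (n - 1) * w ^ j) p + sm ((w ^ (n - 1)) ^ j) q"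
      unfolding e1 by (simp add: vs.scale_right_distrib power_mult[symmetric] mult.commute)
    also have "(w ^ j) ^ (n - 1) * w ^ j = 1"
    proof -
      have "(w ^ j) ^ (n - 1) * w ^ j = (w ^ n) ^ j"
      proof -
        have "(w ^ j) ^ (n - 1) * w ^ j = (w ^ j) ^ Suc (n - 1)" by (simp add: mult.commute)
        also have "Suc (n - 1) = n" using n2 by simp
        finally show ?thesis by (simp add: power_mult[symmetric] mult.commute)
      qed
      then show ?thesis using wn by simp
    qed
    finally show ?thesis by simp
  qed
  have "(\<Sum>j<n. \<Sum>i\<le>k. sm ((w ^ (n - 1 + i)) ^ j) (Wd p q i k)) = (\<Sum>j<n. p + sm ((w ^ (n - 1)) ^ j) q)"
    using eq by simp
  also have "\<dots> = sm (of_nat n) p + sm (\<Sum>j<n. (w ^ (n - 1)) ^ j) q"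
    by (simp add: sum.distrib vs.sum_constant_scale vs.scale_sum_left)
  also have "(\<Sum>j<n. (w ^ (n - 1)) ^ j) = 0"
    using root_sum[of n w "n - 1"] pr n2 by (auto simp: n_def dest: dvd_imp_le)
  finally have L: "(\<Sum>j<n. \<Sum>i\<le>k. sm ((w ^ (n - 1 + i)) ^ j) (Wd p q i k)) = sm (of_nat n) p" by simp
  have "(\<Sum>j<n. \<Sum>i\<le>k. sm ((w ^ (n - 1 + i)) ^ j) (Wd p q i k))
      = (\<Sum>i\<le>k. sm (\<Sum>j<n. (w ^ (n - 1 + i)) ^ j) (Wd p q i k))"
    by (subst sum.swap) (simp add: vs.scale_sum_left)
  also have "\<dots> = (\<Sum>i\<le>k. sm (if n dvd (n - 1 + i) then of_nat n else 0) (Wd p q i k))"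
    using root_sum[of n w] pr n2 by (simp add: n_def)
  also have "\<dots> = (\<Sum>i\<in>{1, k}. sm (if n dvd (n - 1 + i) then of_nat n else 0) (Wd p q i k))"
    by (rule sum.mono_neutral_right) (use nondvd_aux n2 kn in auto)
  also have "\<dots> = sm (of_nat n) (Wd p q 1 k) + sm (of_nat n) p"
    using kn n2 Wd_diag[of k p q] pk by (simp add: mult_2)
  finally have "sm (of_nat n) (Wd p q 1 k) + sm (of_nat n) p = sm (of_nat n) p" using L by simp
  then have "sm (of_nat n) (Wd p q 1 k) = 0" by simp
  then show ?thesis using nz by simp
qed

end

definition Zi :: "'x \<Rightarrow> 'x \<Rightarrow> 'f::field" where "Zi = (\<lambda>_ _. 0)"
definition EE :: "'x \<Rightarrow> 'x \<Rightarrow> 'x \<Rightarrow> 'x \<Rightarrow> 'f::field" where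
  "EE x y = (\<lambda>a b. if a = x \<and> b = y then 1 else 0)"

abbreviation IA where "IA \<equiv> incidence_alg"

lemma add_in[simp]: "f \<in> IA \<Longrightarrow> g \<in> IA \<Longrightarrow> inc_add f g \<in> IA"
  by (simp add: incidence_alg_def inc_add_def)
lemma smult_in[simp]: "f \<in> IA \<Longrightarrow> inc_smult c f \<in> IA"
  by (simp add: incidence_alg_def inc_smult_def)
lemma EE_in[simp]: "x \<le> y \<Longrightarrow> EE x y \<in> IA"
  by (auto simp add: incidence_alg_def EE_def)
lemma Zi_in[simp]: "Zi \<in> IA" by (simp add: incidence_alg_def Zi_def)
lemma delta_in[simp]: "inc_delta \<in> IA" by (simp add: incidence_alg_def inc_delta_def)
lemma mult_in[simp]: "inc_mult f g \<in> IA"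
  by (auto simp add: incidence_alg_def inc_mult_def intro!: sum.neutral dest: order_trans)

lemma mult_EL:
  fixes f :: "'x::{order,finite} \<Rightarrow> 'x \<Rightarrow> 'f::field"
  assumes "x \<le> y" "f \<in> IA"
  shows "inc_mult (EE x y) f = (\<lambda>a b. if a = x then f y b else 0)"
proof (rule ext, rule ext)
  fix a b
  show "inc_mult (EE x y) f a b = (if a = x then f y b else 0)"
  proof (cases "a = x")
    case True
    have "inc_mult (EE x y) f a b = (\<Sum>t\<in>{t. a \<le> t \<and> t \<le> b}. if t = y then f t b else 0)"
      unfolding inc_mult_def EE_def using True by (intro sum.cong) auto
    also have "\<dots> = (if y \<in> {t. a \<le> t \<and> t \<le> b} then f y b else 0)"
      by (rule sum.delta) simp
    also have "\<dots> = f y b" using assms True by (auto simp: incidence_alg_def)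
    finally show ?thesis using True by simp
  qed (simp add: inc_mult_def EE_def)
qed

lemma mult_ER:
  fixes f :: "'x::{order,finite} \<Rightarrow> 'x \<Rightarrow> 'f::field"
  assumes "x \<le> y" "f \<in> IA"
  shows "inc_mult f (EE x y) = (\<lambda>a b. if b = y then f a x else 0)"
proof (rule ext, rule ext)
  fix a b
  show "inc_mult f (EE x y) a b = (if b = y then f a x else 0)"
  proof (cases "b = y")
    case True
    have "inc_mult f (EE x y) a b = (\<Sum>t\<in>{t. a \<le> t \<and> t \<le> b}. if t = x then f a t else 0)"
      unfolding inc_mult_def EE_def using True by (intro sum.cong) auto
    also have "\<dots> = (if x \<in> {t. a \<le> t \<and> t \<le> b} then f a x else 0)"
      by (rule sum.delta) simp
    also have "\<dots> = f a x" using assms True by (auto simp: incidence_alg_def)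
    finally show ?thesis using True by simp
  qed (simp add: inc_mult_def EE_def)
qed

lemma mult_addL: "inc_mult (inc_add f g) h = inc_add (inc_mult f h) (inc_mult g h)"
  by (simp add: inc_mult_def inc_add_def distrib_right sum.distrib)
lemma mult_addR: "inc_mult h (inc_add f g) = inc_add (inc_mult h f) (inc_mult h g)"
  by (simp add: inc_mult_def inc_add_def distrib_left sum.distrib)
lemma mult_smultL: "inc_mult (inc_smult c f) h = inc_smult c (inc_mult f h)"
  by (simp add: inc_mult_def inc_smult_def sum_distrib_left mult.assoc)
lemma mult_smultR: "inc_mult h (inc_smult c f) = inc_smult c (inc_mult h f)"
  by (simp add: inc_mult_def inc_smult_def sum_distrib_left mult.left_commute)

lemma mult_deltaR: "f \<in> IA \<Longrightarrow> inc_mult f inc_delta = f"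
proof (rule ext, rule ext)
  fix a b assume f: "f \<in> IA"
  have "inc_mult f inc_delta a b = (\<Sum>t\<in>{t. a \<le> t \<and> t \<le> b}. if t = b then f a t else 0)"
    unfolding inc_mult_def inc_delta_def by (intro sum.cong) auto
  also have "\<dots> = f a b" using f by (subst sum.delta) (auto simp: incidence_alg_def)
  finally show "inc_mult f inc_delta a b = f a b" .
qed

lemma mult_deltaL: "f \<in> IA \<Longrightarrow> inc_mult inc_delta f = f"
proof (rule ext, rule ext)
  fix a b assume f: "f \<in> IA"
  have "inc_mult inc_delta f a b = (\<Sum>t\<in>{t. a \<le> t \<and> t \<le> b}. if t = a then f t b else 0)"
    unfolding inc_mult_def inc_delta_def by (intro sum.cong) auto
  also have "\<dots> = f a b" using f by (subst sum.delta) (auto simp: incidence_alg_def)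
  finally show "inc_mult inc_delta f a b = f a b" .
qed

lemma mult_EE:
  "x \<le> y \<Longrightarrow> z \<le> w \<Longrightarrow>
    inc_mult (EE x y) (EE z w) = (if y = z then EE x w else (Zi :: 'x::{order,finite} \<Rightarrow> 'x \<Rightarrow> 'f::field))"
  by (simp add: mult_EL) (auto simp: EE_def Zi_def fun_eq_iff)

lemma mult_assoc:
  fixes f g h :: "'x::{order,finite} \<Rightarrow> 'x \<Rightarrow> 'f::field"
  shows "inc_mult (inc_mult f g) h = inc_mult f (inc_mult g h)"
proof (rule ext, rule ext)
  fix a b
  define G where "G t z = f a t * g t z * h z b" for t z
  have L: "inc_mult (inc_mult f g) h a b = (\<Sum>z\<in>{z. a \<le> z \<and> z \<le> b}. \<Sum>t\<in>{t\<in>UNIV. a \<le> t \<and> t \<le> z}. G t z)"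
    by (simp add: inc_mult_def sum_distrib_right G_def)
  have R: "inc_mult f (inc_mult g h) a b = (\<Sum>t\<in>{t. a \<le> t \<and> t \<le> b}. \<Sum>z\<in>{z. t \<le> z \<and> z \<le> b}. G t z)"
    by (simp add: inc_mult_def sum_distrib_left mult.assoc G_def)
  have "(\<Sum>z\<in>{z. a \<le> z \<and> z \<le> b}. \<Sum>t\<in>{t\<in>UNIV. a \<le> t \<and> t \<le> z}. G t z)
      = (\<Sum>t\<in>UNIV. \<Sum>z\<in>{z\<in>{z. a \<le> z \<and> z \<le> b}. a \<le> t \<and> t \<le> z}. G t z)"
    by (rule sum.swap_restrict) auto
  also have "\<dots> = (\<Sum>t\<in>{t. a \<le> t \<and> t \<le> b}. \<Sum>z\<in>{z\<in>{z. a \<le> z \<and> z \<le> b}. a \<le> t \<and> t \<le> z}. G t z)"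
  proof (rule sum.mono_neutral_right)
    show "\<forall>t\<in>UNIV - {t. a \<le> t \<and> t \<le> b}. (\<Sum>z\<in>{z\<in>{z. a \<le> z \<and> z \<le> b}. a \<le> t \<and> t \<le> z}. G t z) = 0"
    proof
      fix t assume "t \<in> UNIV - {t. a \<le> t \<and> t \<le> b}"
      then have e: "{z\<in>{z. a \<le> z \<and> z \<le> b}. a \<le> t \<and> t \<le> z} = {}"
        by (auto dest: order_trans)
      show "(\<Sum>z\<in>{z\<in>{z. a \<le> z \<and> z \<le> b}. a \<le> t \<and> t \<le> z}. G t z) = 0"
        by (simp only: e sum.empty)
    qed
  qed auto
  also have "\<dots> = (\<Sum>t\<in>{t. a \<le> t \<and> t \<le> b}. \<Sum>z\<in>{z. t \<le> z \<and> z \<le> b}. G t z)"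
  proof (rule sum.cong[OF refl])
    fix t assume "t \<in> {t. a \<le> t \<and> t \<le> b}"
    then have "{z\<in>{z. a \<le> z \<and> z \<le> b}. a \<le> t \<and> t \<le> z} = {z. t \<le> z \<and> z \<le> b}"
      by (auto dest: order_trans)
    then show "(\<Sum>z\<in>{z\<in>{z. a \<le> z \<and> z \<le> b}. a \<le> t \<and> t \<le> z}. G t z) = (\<Sum>z\<in>{z. t \<le> z \<and> z \<le> b}. G t z)"
      by simp
  qed
  finally show "inc_mult (inc_mult f g) h a b = inc_mult f (inc_mult g h) a b" using L R by simp
qed

locale kset = balg sm for sm :: "'f::field \<Rightarrow> 'b::ring \<Rightarrow> 'b" +
  fixes k :: nat and \<phi> :: "('x::{order,finite} \<Rightarrow> 'x \<Rightarrow> 'f) \<Rightarrow> 'b" and w :: 'f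
  assumes k3: "k \<ge> 3" and pr: "primitive_root_of_unity (k - 1) w" and kne: "of_nat k \<noteq> (0::'f)"
   and padd: "\<forall>f\<in>incidence_alg. \<forall>g\<in>incidence_alg. \<phi> (inc_add f g) = \<phi> f + \<phi> g"
   and psm: "\<forall>c. \<forall>f\<in>incidence_alg. \<phi> (inc_smult c f) = sm c (\<phi> f)"
   and pres: "\<phi> ` Pk_inc k \<subseteq> Pk k"
begin

abbreviation "u \<equiv> \<phi> inc_delta"

lemma phi_add[simp]: "f \<in> IA \<Longrightarrow> g \<in> IA \<Longrightarrow> \<phi> (inc_add f g) = \<phi> f + \<phi> g"
  using padd by blast
lemma phi_smult[simp]: "f \<in> IA \<Longrightarrow> \<phi> (inc_smult c f) = sm c (\<phi> f)"
  using psm by blast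
lemma phi_Z[simp]: "\<phi> Zi = 0"
proof -
  have "inc_smult 0 Zi = (Zi :: 'x \<Rightarrow> 'x \<Rightarrow> 'f)" by (simp add: inc_smult_def Zi_def)
  then have "\<phi> Zi = sm 0 (\<phi> Zi)" using phi_smult[of Zi 0] by simp
  then show ?thesis by simp
qed
lemma phi_neg[simp]: "f \<in> IA \<Longrightarrow> \<phi> (inc_smult (-1) f) = - \<phi> f"
  by simp

lemma kp: "f \<in> IA \<Longrightarrow> inc_pow f k = f \<Longrightarrow> bpow (\<phi> f) k = \<phi> f"
  using pres by (auto simp: Pk_inc_def Pk_def)

lemma idem_pow: assumes "g \<in> IA" "inc_mult g g = g" "m \<ge> 1" shows "inc_pow g m = g"
  using assms(3)
proof (induction m rule: nat_induct_at_least)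
  case base then show ?case using assms by (simp add: mult_deltaR)
next
  case (Suc m) then show ?case using assms by simp
qed

lemma combo_pow:
  assumes g: "g \<in> IA" "inc_mult g g = g" and h: "h \<in> IA" "inc_mult h h = h"
    and o: "inc_mult g h = Zi" "inc_mult h g = Zi" and m: "m \<ge> 1"
  shows "inc_pow (inc_add (inc_smult t g) h) m = inc_add (inc_smult (t ^ m) g) h"
  using m
proof (induction m rule: nat_induct_at_least)
  case base then show ?case using g h by (simp add: mult_deltaR)
next
  case (Suc m)
  have "inc_pow (inc_add (inc_smult t g) h) (Suc m)
      = inc_mult (inc_add (inc_smult t g) h) (inc_add (inc_smult (t ^ m) g) h)"
    using Suc by simp
  also have "\<dots> = inc_add (inc_smult (t ^ Suc m) g) h"
    by (simp add: mult_addL mult_addR mult_smultL mult_smultR g h o)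
       (simp add: fun_eq_iff inc_add_def inc_smult_def Zi_def mult.commute)
  finally show ?case .
qed

lemma GL:
  assumes g: "g \<in> IA" "inc_mult g g = g" and h: "h \<in> IA" "inc_mult h h = h"
    and o: "inc_mult g h = Zi" "inc_mult h g = Zi"
  shows "\<phi> g * \<phi> h = 0 \<and> \<phi> h * \<phi> g = 0"
proof -
  have k1: "k \<ge> 1" using k3 by simp
  have pk: "bpow (\<phi> g) k = \<phi> g" using g idem_pow[OF g k1] by (intro kp) auto
  have qk: "bpow (\<phi> h) k = \<phi> h" using h idem_pow[OF h k1] by (intro kp) auto
  have wk: "(w ^ j) ^ k = w ^ j" for j
  proof -
    have "w ^ (k - 1) = 1" using pr by (simp add: primitive_root_of_unity_def)
    moreover have "(w ^ j) ^ k = (w ^ (k - 1)) ^ j * w ^ j"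
    proof -
      have "(w ^ j) ^ k = (w ^ j) ^ Suc (k - 1)" using k3 by simp
      also have "\<dots> = (w ^ j) ^ (k - 1) * w ^ j" by (simp add: mult.commute)
      also have "(w ^ j) ^ (k - 1) = (w ^ (k - 1)) ^ j" by (simp add: power_mult[symmetric] mult.commute)
      finally show ?thesis .
    qed
    ultimately show ?thesis by simp
  qed
  have all: "\<forall>j<k-1. bpow (sm (w ^ j) (\<phi> g) + \<phi> h) k = sm (w ^ j) (\<phi> g) + \<phi> h"
  proof (intro allI impI)
    fix j
    let ?f = "inc_add (inc_smult (w ^ j) g) h"
    have "inc_pow ?f k = ?f" using combo_pow[OF g h o k1, of "w ^ j"] wk by simp
    then have "bpow (\<phi> ?f) k = \<phi> ?f" using g h by (intro kp) auto
    then show "bpow (sm (w ^ j) (\<phi> g) + \<phi> h) k = sm (w ^ j) (\<phi> g) + \<phi> h" using g h by simp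
  qed
  have "Wd (\<phi> g) (\<phi> h) 1 k = 0" using S1_zero[OF k3 pr pk all] .
  then show ?thesis using KL[OF k3 kne qk] by simp
qed

definition "cmp g = inc_add inc_delta (inc_smult (-1) g)"

lemma IL:
  assumes g: "g \<in> IA" "inc_mult g g = g"
  shows "\<phi> g * u = \<phi> g * \<phi> g" "u * \<phi> g = \<phi> g * \<phi> g"
proof -
  let ?h = "inc_add inc_delta (inc_smult (-1) g)"
  have hin: "?h \<in> IA" using g by simp
  have hh: "inc_mult ?h ?h = ?h"
    by (simp add: mult_addL mult_addR mult_smultL mult_smultR g mult_deltaL mult_deltaR)
       (simp add: fun_eq_iff inc_add_def inc_smult_def)
  have o1: "inc_mult g ?h = Zi"
    by (simp add: mult_addL mult_addR mult_smultL mult_smultR g mult_deltaL mult_deltaR)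
       (simp add: fun_eq_iff inc_add_def inc_smult_def Zi_def)
  have o2: "inc_mult ?h g = Zi"
    by (simp add: mult_addL mult_addR mult_smultL mult_smultR g mult_deltaL mult_deltaR)
       (simp add: fun_eq_iff inc_add_def inc_smult_def Zi_def)
  have ph: "\<phi> ?h = u - \<phi> g" using g by simp
  from GL[OF g hin hh o1 o2] ph
  have "\<phi> g * (u - \<phi> g) = 0" "(u - \<phi> g) * \<phi> g = 0" by auto
  then show "\<phi> g * u = \<phi> g * \<phi> g" "u * \<phi> g = \<phi> g * \<phi> g"
    by (simp_all add: algebra_simps)
qed

lemma two_ne: "(2::'f) \<noteq> 0"
  using two_nonzero[OF kne root_n_nonzero[OF pr]] k3 by simp

lemma dbl: "(x::'b) + x = 0 \<Longrightarrow> x = 0"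
proof -
  assume "x + x = 0"
  moreover have "x + x = sm 2 x" using vs.scale_left_distrib[of 1 1 x] by simp
  ultimately have "sm 2 x = 0" by simp
  then show "x = 0" using two_ne by simp
qed

end

abbreviation "neg f \<equiv> inc_smult (-1) f"

lemmas mexp = mult_addL mult_addR mult_smultL mult_smultR mult_EE
lemmas fdefs = fun_eq_iff inc_add_def inc_smult_def EE_def Zi_def

lemma c_EE: "inc_mult (EE x x) (EE x x) = (EE x x :: 'x::{order,finite} \<Rightarrow> 'x \<Rightarrow> 'f::field)"
  by (simp add: mult_EE)
lemma c_EEo: "x \<noteq> z \<Longrightarrow> inc_mult (EE x x) (EE z z) = (Zi :: 'x::{order,finite} \<Rightarrow> 'x \<Rightarrow> 'f::field)"
  by (simp add: mult_EE)

context
  fixes x y :: "'x::{order,finite}"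
  assumes xy: "x < y"
begin
private lemma o0: "x \<le> y" "x \<noteq> y" "y \<noteq> x" "\<not> y \<le> x" using xy by auto

lemma c_g1: "inc_mult (inc_add (EE x x) (EE x y)) (inc_add (EE x x) (EE x y))
   = (inc_add (EE x x) (EE x y) :: 'x \<Rightarrow> 'x \<Rightarrow> 'f::field)"
  using o0 by (simp add: mexp) (auto simp: fdefs)
lemma c_g2: "inc_mult (inc_add (EE x x) (neg (EE x y))) (inc_add (EE x x) (neg (EE x y)))
   = (inc_add (EE x x) (neg (EE x y)) :: 'x \<Rightarrow> 'x \<Rightarrow> 'f::field)"
  using o0 by (simp add: mexp) (auto simp: fdefs)
lemma c_h1: "inc_mult (inc_add (EE y y) (neg (EE x y))) (inc_add (EE y y) (neg (EE x y)))
   = (inc_add (EE y y) (neg (EE x y)) :: 'x \<Rightarrow> 'x \<Rightarrow> 'f::field)"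
  using o0 by (simp add: mexp) (auto simp: fdefs)
lemma c_g1h1: "inc_mult (inc_add (EE x x) (EE x y)) (inc_add (EE y y) (neg (EE x y)))
   = (Zi :: 'x \<Rightarrow> 'x \<Rightarrow> 'f::field)"
  using o0 by (simp add: mexp) (auto simp: fdefs)
lemma c_h1g1: "inc_mult (inc_add (EE y y) (neg (EE x y))) (inc_add (EE x x) (EE x y))
   = (Zi :: 'x \<Rightarrow> 'x \<Rightarrow> 'f::field)"
  using o0 by (simp add: mexp) (auto simp: fdefs)
lemma c_zg1: "z \<noteq> x \<Longrightarrow> z \<noteq> y \<Longrightarrow> inc_mult (EE z z) (inc_add (EE x x) (EE x y))
   = (Zi :: 'x \<Rightarrow> 'x \<Rightarrow> 'f::field)"
  using o0 by (simp add: mexp) (auto simp: fdefs)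
lemma c_g1z: "z \<noteq> x \<Longrightarrow> z \<noteq> y \<Longrightarrow> inc_mult (inc_add (EE x x) (EE x y)) (EE z z)
   = (Zi :: 'x \<Rightarrow> 'x \<Rightarrow> 'f::field)"
  using o0 by (simp add: mexp) (auto simp: fdefs)
end


definition hA :: "'x::{order,finite} \<Rightarrow> 'x \<Rightarrow> 'x \<Rightarrow> 'x \<Rightarrow> 'x \<Rightarrow> 'f::field" where
  "hA x y w = inc_add (inc_add (EE y y) (EE y w)) (inc_add (neg (EE x y)) (neg (EE x w)))"
definition hB :: "'x::{order,finite} \<Rightarrow> 'x \<Rightarrow> 'x \<Rightarrow> 'x \<Rightarrow> 'x \<Rightarrow> 'f::field" where
  "hB x y w = inc_add (inc_add (EE y y) (EE y w)) (inc_add (EE x y) (EE x w))"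
definition gC :: "'x::{order,finite} \<Rightarrow> 'x \<Rightarrow> 'x \<Rightarrow> 'x \<Rightarrow> 'x \<Rightarrow> 'f::field" where
  "gC x y w = inc_add (inc_add (EE x x) (EE x y)) (EE x w)"
definition gD :: "'x::{order,finite} \<Rightarrow> 'x \<Rightarrow> 'x \<Rightarrow> 'x \<Rightarrow> 'x \<Rightarrow> 'f::field" where
  "gD x y z = inc_add (inc_add (EE y y) (EE x y)) (EE z y)"

context
  fixes x y w :: "'x::{order,finite}"
  assumes xy: "x < y" and yw: "y < w"
begin
private lemma o1: "x \<le> y" "x \<noteq> y" "y \<noteq> x" "\<not> y \<le> x" "y \<le> w" "y \<noteq> w" "w \<noteq> y" "\<not> w \<le> y"
   "x \<le> w" "x \<noteq> w" "w \<noteq> x" "\<not> w \<le> x" using xy yw by auto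


lemma c_hA: "inc_mult (hA x y w) (hA x y w) = ((hA x y w) :: 'x \<Rightarrow> 'x \<Rightarrow> 'f::field)"
  using o1 unfolding hA_def by (simp add: mexp) (auto simp: fdefs)
lemma c_hB: "inc_mult (hB x y w) (hB x y w) = ((hB x y w) :: 'x \<Rightarrow> 'x \<Rightarrow> 'f::field)"
  using o1 unfolding hB_def by (simp add: mexp) (auto simp: fdefs)
lemma c_g1hA: "inc_mult (inc_add (EE x x) (EE x y)) (hA x y w) = (Zi :: 'x \<Rightarrow> 'x \<Rightarrow> 'f::field)"
  using o1 unfolding hA_def by (simp add: mexp) (auto simp: fdefs)
lemma c_hAg1: "inc_mult (hA x y w) (inc_add (EE x x) (EE x y)) = (Zi :: 'x \<Rightarrow> 'x \<Rightarrow> 'f::field)"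
  using o1 unfolding hA_def by (simp add: mexp) (auto simp: fdefs)
lemma c_g2hB: "inc_mult (inc_add (EE x x) (neg (EE x y))) (hB x y w) = (Zi :: 'x \<Rightarrow> 'x \<Rightarrow> 'f::field)"
  using o1 unfolding hB_def by (simp add: mexp) (auto simp: fdefs)
lemma c_hBg2: "inc_mult (hB x y w) (inc_add (EE x x) (neg (EE x y))) = (Zi :: 'x \<Rightarrow> 'x \<Rightarrow> 'f::field)"
  using o1 unfolding hB_def by (simp add: mexp) (auto simp: fdefs)
lemma hA_in: "(hA x y w) \<in> IA" and hB_in: "(hB x y w) \<in> IA" using o1 by (simp_all add: hA_def hB_def)
end

context
  fixes x y z w :: "'x::{order,finite}"
  assumes xy: "x < y" and zw: "z < w" and d: "x \<noteq> z" "x \<noteq> w" "y \<noteq> z" "y \<noteq> w"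
begin
private lemma o2: "x \<le> y" "x \<noteq> y" "y \<noteq> x" "\<not> y \<le> x" "z \<le> w" "z \<noteq> w" "w \<noteq> z" "\<not> w \<le> z"
  "z \<noteq> x" "w \<noteq> x" "z \<noteq> y" "w \<noteq> y" using xy zw d by auto
lemma c_disj: "inc_mult (inc_add (EE x x) (EE x y)) (inc_add (EE z z) (EE z w)) = (Zi :: 'x \<Rightarrow> 'x \<Rightarrow> 'f::field)"
  using o2 d by (simp add: mexp) (auto simp: fdefs)
end

context
  fixes x y w :: "'x::{order,finite}"
  assumes xy: "x < y" and xw: "x < w" and yw: "y \<noteq> w"
begin
private lemma o3: "x \<le> y" "x \<noteq> y" "y \<noteq> x" "\<not> y \<le> x" "x \<le> w" "x \<noteq> w" "w \<noteq> x" "\<not> w \<le> x"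
  "y \<noteq> w" "w \<noteq> y" using xy xw yw by auto
lemma c_gC: "inc_mult (gC x y w) (gC x y w) = ((gC x y w) :: 'x \<Rightarrow> 'x \<Rightarrow> 'f::field)"
  using o3 unfolding gC_def by (simp add: mexp) (auto simp: fdefs)
lemma c_gCh: "inc_mult (gC x y w) (inc_add (EE w w) (neg (EE x w))) = (Zi :: 'x \<Rightarrow> 'x \<Rightarrow> 'f::field)"
  using o3 unfolding gC_def by (simp add: mexp) (auto simp: fdefs)
lemma c_hgC: "inc_mult (inc_add (EE w w) (neg (EE x w))) (gC x y w) = (Zi :: 'x \<Rightarrow> 'x \<Rightarrow> 'f::field)"
  using o3 unfolding gC_def by (simp add: mexp) (auto simp: fdefs)
lemma gC_in: "(gC x y w) \<in> IA" using o3 by (simp add: gC_def)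
end

context
  fixes x y z :: "'x::{order,finite}"
  assumes xy: "x < y" and zy: "z < y" and xz: "x \<noteq> z"
begin
private lemma o4: "x \<le> y" "x \<noteq> y" "y \<noteq> x" "\<not> y \<le> x" "z \<le> y" "z \<noteq> y" "y \<noteq> z" "\<not> y \<le> z"
  "x \<noteq> z" "z \<noteq> x" using xy zy xz by auto
lemma c_gD: "inc_mult (gD x y z) (gD x y z) = ((gD x y z) :: 'x \<Rightarrow> 'x \<Rightarrow> 'f::field)"
  using o4 unfolding gD_def by (simp add: mexp) (auto simp: fdefs)
lemma c_gDh: "inc_mult (gD x y z) (inc_add (EE x x) (neg (EE x y))) = (Zi :: 'x \<Rightarrow> 'x \<Rightarrow> 'f::field)"
  using o4 unfolding gD_def by (simp add: mexp) (auto simp: fdefs)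
lemma c_hgD: "inc_mult (inc_add (EE x x) (neg (EE x y))) (gD x y z) = (Zi :: 'x \<Rightarrow> 'x \<Rightarrow> 'f::field)"
  using o4 unfolding gD_def by (simp add: mexp) (auto simp: fdefs)
lemma gD_in: "(gD x y z) \<in> IA" using o4 by (simp add: gD_def)
end

lemma bpow_uR: assumes "(p::'b::ring) * u = p * p" "m \<ge> 1" shows "bpow p m * u = bpow p (Suc m)"
  using assms(2)
proof (induction m rule: nat_induct_at_least)
  case base then show ?case using assms by simp
next
  case (Suc m)
  have s1: "bpow p (Suc m) = bpow p m * p" by (rule bpow_SucR'[OF Suc(1)])
  have s2: "bpow p (Suc (Suc m)) = bpow p (Suc m) * p" by (rule bpow_SucR') simp
  have "bpow p (Suc m) * u = bpow p m * (p * u)" unfolding s1 by (simp only: mult.assoc)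
  also have "\<dots> = bpow p m * p * p" unfolding assms(1) by (simp only: mult.assoc)
  also have "\<dots> = bpow p (Suc (Suc m))" unfolding s2 s1 ..
  finally show ?case .
qed

lemma pu_pow: assumes "(p::'b::ring) * u = p * p" "j \<ge> 1" shows "p * bpow u j = bpow p (Suc j)"
  using assms(2)
proof (induction j rule: nat_induct_at_least)
  case base then show ?case using assms by simp
next
  case (Suc j)
  have s1: "bpow u (Suc j) = bpow u j * u" by (rule bpow_SucR'[OF Suc(1)])
  have "p * bpow u (Suc j) = (p * bpow u j) * u" unfolding s1 by (simp only: mult.assoc)
  also have "\<dots> = bpow p (Suc (Suc j))" unfolding Suc(2) by (rule bpow_uR[OF assms(1)]) simp
  finally show ?case .
qed

lemma bpow_uL: assumes "u * (p::'b::ring) = p * p" "m \<ge> 1" shows "u * bpow p m = bpow p (Suc m)"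
  using assms(2)
proof (induction m rule: nat_induct_at_least)
  case base then show ?case using assms by simp
next
  case (Suc m)
  have s1: "bpow p (Suc m) = p * bpow p m" by (rule bpow_SucL[OF Suc(1)])
  have s2: "bpow p (Suc (Suc m)) = p * bpow p (Suc m)" by simp
  have "u * bpow p (Suc m) = (u * p) * bpow p m" unfolding s1 by (simp only: mult.assoc)
  also have "\<dots> = p * (p * bpow p m)" unfolding assms(1) by (simp only: mult.assoc)
  also have "\<dots> = bpow p (Suc (Suc m))" unfolding s2 s1 ..
  finally show ?case .
qed

lemma up_pow: assumes "u * (p::'b::ring) = p * p" "j \<ge> 1" shows "bpow u j * p = bpow p (Suc j)"
  using assms(2)
proof (induction j rule: nat_induct_at_least)
  case base then show ?case using assms by simp
next
  case (Suc j)
  have s1: "bpow u (Suc j) = u * bpow u j" by (rule bpow_SucL[OF Suc(1)])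
  have "bpow u (Suc j) * p = u * (bpow u j * p)" unfolding s1 by (simp only: mult.assoc)
  also have "\<dots> = bpow p (Suc (Suc j))" unfolding Suc(2) by (rule bpow_uL[OF assms(1)]) simp
  finally show ?case .
qed

context kset begin

abbreviation "e x y \<equiv> \<phi> (EE x y)"

lemma P_rel: "e x x * u = e x x * e x x" "u * e x x = e x x * e x x"
  using IL[of "EE x x"] c_EE by auto

lemma P_kp: "bpow (e x x) k = e x x"
proof -
  have i: "inc_pow (EE x x) k = EE x x" by (rule idem_pow) (use c_EE k3 in auto)
  show ?thesis by (rule kp) (use i in auto)
qed

lemma PP0: "x \<noteq> z \<Longrightarrow> e x x * e z z = 0"
  using GL[of "EE x x" "EE z z"] c_EE c_EEo[of x z] c_EEo[of z x] by auto

lemma kpow_id: "p * u = p * p \<Longrightarrow> u * p = p * p \<Longrightarrow> bpow p k = p \<Longrightarrow>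
   p * bpow u (k - 1) = p \<and> bpow u (k - 1) * p = p"
  using pu_pow[of p u "k - 1"] up_pow[of u p "k - 1"] k3 by simp

lemma N_rel:
  assumes xy: "x < y"
  shows "e x y * e x y = 0 \<and> e x y * u = e x x * e x y + e x y * e x x
    \<and> u * e x y = e x x * e x y + e x y * e x x
    \<and> e x x * e x y = e x y * e y y \<and> e y y * e x y = e x y * e x x"
proof -
  let ?P = "e x x" and ?Q = "e y y" and ?N = "e x y"
  have le: "x \<le> y" using xy by simp
  have g1: "\<phi> (inc_add (EE x x) (EE x y)) = ?P + ?N" using le by simp
  have g2: "\<phi> (inc_add (EE x x) (neg (EE x y))) = ?P - ?N" using le by simp
  have h1: "\<phi> (inc_add (EE y y) (neg (EE x y))) = ?Q - ?N" using le by simp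
  have i1: "(?P + ?N) * u = (?P + ?N) * (?P + ?N)" "u * (?P + ?N) = (?P + ?N) * (?P + ?N)"
    using IL[of "inc_add (EE x x) (EE x y)", OF _ c_g1[OF xy]] le unfolding g1 by auto
  have i2: "(?P - ?N) * u = (?P - ?N) * (?P - ?N)" "u * (?P - ?N) = (?P - ?N) * (?P - ?N)"
    using IL[of "inc_add (EE x x) (neg (EE x y))", OF _ c_g2[OF xy]] le unfolding g2 by auto
  have gl: "(?P + ?N) * (?Q - ?N) = 0" "(?Q - ?N) * (?P + ?N) = 0"
    using GL[of "inc_add (EE x x) (EE x y)" "inc_add (EE y y) (neg (EE x y))",
      OF _ c_g1[OF xy] _ c_h1[OF xy] c_g1h1[OF xy] c_h1g1[OF xy]] le unfolding g1 h1 by auto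
  have Pu: "?P * u = ?P * ?P" "u * ?P = ?P * ?P" using P_rel by auto
  have PQ: "?P * ?Q = 0" "?Q * ?P = 0" using PP0 xy by auto
  have e1: "?N * u = ?P * ?N + ?N * ?P + ?N * ?N"
    using i1(1) Pu(1) by (simp add: algebra_simps)
  have e2: "?N * u = ?P * ?N + ?N * ?P - ?N * ?N"
    using i2(1) Pu(1) by (simp add: algebra_simps)
  have NN: "?N * ?N = 0"
  proof -
    from e1 e2 have "?N * ?N + ?N * ?N = 0" by (simp add: algebra_simps)
    then show ?thesis by (rule dbl)
  qed
  have e3: "u * ?N = ?P * ?N + ?N * ?P + ?N * ?N"
    using i1(2) Pu(2) by (simp add: algebra_simps)
  have r1: "?P * ?N = ?N * ?Q" using gl(1) PQ NN by (simp add: algebra_simps)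
  have r2: "?Q * ?N = ?N * ?P" using gl(2) PQ NN by (simp add: algebra_simps)
  show ?thesis using NN e1 e3 r1 r2 by simp
qed


lemma PQ0: "x < y \<Longrightarrow> e x x * e y y = 0 \<and> e y y * e x x = 0"
  using PP0[of x y] PP0[of y x] by auto

lemma N_pow:
  assumes xy: "x < y" and j: "j \<ge> 1"
  shows "e x y * bpow u j = bpow (e x x) j * e x y + e x y * bpow (e x x) j"
  using j
proof (induction j rule: nat_induct_at_least)
  case base then show ?case using N_rel[OF xy] by simp
next
  case (Suc j)
  let ?P = "e x x" and ?Q = "e y y" and ?N = "e x y"
  have R: "?N * ?N = 0" "?N * u = ?P * ?N + ?N * ?P" "?Q * ?N = ?N * ?P" using N_rel[OF xy] by auto
  have z: "bpow ?P j * ?Q = 0" using PQ0[OF xy] by (intro bpow_zeroL) auto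
  have z2: "bpow ?P j * (?N * ?P) = 0" using z R(3) by (metis mult.assoc mult_zero_left)
  have s1: "bpow u (Suc j) = bpow u j * u" by (rule bpow_SucR'[OF Suc(1)])
  have s2: "bpow ?P j * ?P = bpow ?P (Suc j)" by (rule bpow_SucR'[OF Suc(1), symmetric])
  have s3: "bpow ?P j * u = bpow ?P (Suc j)" by (rule bpow_uR[OF P_rel(1) Suc(1)])
  have "?N * bpow u (Suc j) = (bpow ?P j * ?N + ?N * bpow ?P j) * u"
    unfolding s1 Suc(2)[symmetric] by (simp add: mult.assoc)
  also have "\<dots> = bpow ?P j * (?N * u) + ?N * (bpow ?P j * u)" by (simp add: algebra_simps)
  also have "\<dots> = bpow ?P j * ?P * ?N + bpow ?P j * (?N * ?P) + ?N * bpow ?P (Suc j)"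
    unfolding R(2) s3 by (simp add: algebra_simps)
  also have "\<dots> = bpow ?P (Suc j) * ?N + ?N * bpow ?P (Suc j)" unfolding s2 z2 by simp
  finally show ?case .
qed

lemma uN: "x < y \<Longrightarrow> u * e x y = e x y * u" using N_rel by auto

lemma N_un:
  assumes xy: "x < y"
  shows "e x y * bpow u (k - 1) = e x y \<and> bpow u (k - 1) * e x y = e x y"
proof -
  let ?g = "inc_add (EE x x) (EE x y)"
  have le: "x \<le> y" using xy by simp
  have gin: "?g \<in> IA" using le by simp
  have g1: "\<phi> ?g = e x x + e x y" using le by simp
  have i: "inc_pow ?g k = ?g" by (rule idem_pow) (use c_g1[OF xy] k3 le in auto)
  have kg: "bpow (e x x + e x y) k = e x x + e x y" using kp[OF gin i] unfolding g1 .
  have il: "(e x x + e x y) * u = (e x x + e x y) * (e x x + e x y)"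
    "u * (e x x + e x y) = (e x x + e x y) * (e x x + e x y)"
    using IL[OF gin c_g1[OF xy]] unfolding g1 by auto
  have A: "(e x x + e x y) * bpow u (k - 1) = e x x + e x y \<and> bpow u (k - 1) * (e x x + e x y) = e x x + e x y"
    using kpow_id[OF il kg] .
  have B: "e x x * bpow u (k - 1) = e x x \<and> bpow u (k - 1) * e x x = e x x"
    using kpow_id[OF P_rel P_kp] .
  show ?thesis using A B by (simp add: algebra_simps)
qed

lemma zN:
  assumes xy: "x < y" and z: "z \<noteq> x" "z \<noteq> y"
  shows "e z z * e x y = 0 \<and> e x y * e z z = 0"
proof -
  have le: "x \<le> y" using xy by simp
  have g1: "\<phi> (inc_add (EE x x) (EE x y)) = e x x + e x y" using le by simp
  have "e z z * (e x x + e x y) = 0 \<and> (e x x + e x y) * e z z = 0"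
    using GL[of "EE z z" "inc_add (EE x x) (EE x y)", OF _ c_EE _ c_g1[OF xy] c_zg1[OF xy z] c_g1z[OF xy z]]
      le unfolding g1 by auto
  moreover have "e z z * e x x = 0" "e x x * e z z = 0" using PP0 z by auto
  ultimately show ?thesis by (simp add: algebra_simps)
qed

end

context kset begin

lemma chain:
  assumes xy: "x < y" and yw: "y < z"
  shows "e x y * e y z = e x x * e x z \<and> e y z * e x y = e x z * e x x"
proof -
  have xw: "x < z" using xy yw by simp
  have le: "x \<le> y" "y \<le> z" "x \<le> z" "x \<le> x" "y \<le> y" using xy yw by auto
  let ?P = "e x x" and ?Q = "e y y" and ?a = "e x y" and ?b = "e y z" and ?c = "e x z"
  have g1: "\<phi> (inc_add (EE x x) (EE x y)) = ?P + ?a" using le by simp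
  have g2: "\<phi> (inc_add (EE x x) (neg (EE x y))) = ?P - ?a" using le by simp
  have hA: "\<phi> (hA x y z) = (?Q + ?b) + (- ?a + - ?c)" unfolding hA_def using le by simp
  have hB: "\<phi> (hB x y z) = (?Q + ?b) + (?a + ?c)" unfolding hB_def using le by simp
  have G1: "(?P + ?a) * ((?Q + ?b) + (- ?a + - ?c)) = 0" "((?Q + ?b) + (- ?a + - ?c)) * (?P + ?a) = 0"
    using GL[OF _ c_g1[OF xy] hA_in[OF xy yw] c_hA[OF xy yw] c_g1hA[OF xy yw] c_hAg1[OF xy yw]] le
    unfolding g1 hA by auto
  have G2: "(?P - ?a) * ((?Q + ?b) + (?a + ?c)) = 0" "((?Q + ?b) + (?a + ?c)) * (?P - ?a) = 0"
    using GL[OF _ c_g2[OF xy] hB_in[OF xy yw] c_hB[OF xy yw] c_g2hB[OF xy yw] c_hBg2[OF xy yw]] le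
    unfolding g2 hB by auto
  have PQ: "?P * ?Q = 0" "?Q * ?P = 0" using PQ0[OF xy] by auto
  have Pb: "?P * ?b = 0" "?b * ?P = 0" using zN[OF yw, of x] xy xw by auto
  have Ra: "?a * ?a = 0" "?P * ?a = ?a * ?Q" "?Q * ?a = ?a * ?P" using N_rel[OF xy] by auto
  have E1: "?a * ?b - ?a * ?c - ?P * ?c = 0"
    using G1(1) PQ Pb Ra by (simp add: algebra_simps)
  have E2: "?P * ?c - ?a * ?b - ?a * ?c = 0"
    using G2(1) PQ Pb Ra by (simp add: algebra_simps)
  have ac: "?a * ?c = 0"
  proof -
    have "- (?a * ?c + ?a * ?c) = (?a * ?b - ?a * ?c - ?P * ?c) + (?P * ?c - ?a * ?b - ?a * ?c)"
      by (simp add: algebra_simps)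
    also have "\<dots> = 0" unfolding E1 E2 by simp
    finally have "- (?a * ?c + ?a * ?c) = 0" .
    then have "?a * ?c + ?a * ?c = 0" by (simp only: neg_equal_0_iff_equal)
    then show ?thesis by (rule dbl)
  qed
  have r1: "?a * ?b = ?P * ?c" using E1 ac by simp
  have E3: "?b * ?a - ?c * ?P - ?c * ?a = 0"
    using G1(2) PQ Pb Ra by (simp add: algebra_simps)
  have E4: "?c * ?P - ?b * ?a - ?c * ?a = 0"
    using G2(2) PQ Pb Ra by (simp add: algebra_simps)
  have ca: "?c * ?a = 0"
  proof -
    have "- (?c * ?a + ?c * ?a) = (?b * ?a - ?c * ?P - ?c * ?a) + (?c * ?P - ?b * ?a - ?c * ?a)"
      by (simp add: algebra_simps)
    also have "\<dots> = 0" unfolding E3 E4 by simp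
    finally have "- (?c * ?a + ?c * ?a) = 0" .
    then have "?c * ?a + ?c * ?a = 0" by (simp only: neg_equal_0_iff_equal)
    then show ?thesis by (rule dbl)
  qed
  have r2: "?b * ?a = ?c * ?P" using E3 ca by simp
  show ?thesis using r1 r2 by simp
qed

end

context kset begin

lemma zero_prod:
  assumes xy: "x < y" and zt: "z < t" and yz: "y \<noteq> z" and tx: "t \<noteq> x"
  shows "e x y * e z t = 0"
proof (cases "x = z")
  case xz: True
  show ?thesis
  proof (cases "y = t")
    case True then show ?thesis using xz N_rel[OF xy] by simp
  next
    case yt: False
    have xt: "x < t" using zt xz by simp
    have le: "x \<le> y" "x \<le> t" "t \<le> t" "x \<le> x" using xy xt by auto
    let ?P = "e x x" and ?R = "e t t" and ?a = "e x y" and ?d = "e x t"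
    have g: "\<phi> (gC x y t) = (?P + ?a) + ?d" unfolding gC_def using le by simp
    have h: "\<phi> (inc_add (EE t t) (neg (EE x t))) = ?R - ?d" using le by simp
    have G: "((?P + ?a) + ?d) * (?R - ?d) = 0"
      using GL[OF gC_in[OF xy xt yt] c_gC[OF xy xt yt] _ c_h1[OF xt] c_gCh[OF xy xt yt] c_hgC[OF xy xt yt]] le
      unfolding g h by auto
    have PR: "?P * ?R = 0" using PP0 xt by simp
    have aR: "?a * ?R = 0" using zN[OF xy, of t] xt yt by auto
    have dR: "?d * ?d = 0" "?P * ?d = ?d * ?R" using N_rel[OF xt] by auto
    have "- (?a * ?d) = ((?P + ?a) + ?d) * (?R - ?d)" using PR aR dR by (simp add: algebra_simps)
    then show ?thesis using G xz by simp
  qed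
next
  case xz: False
  show ?thesis
  proof (cases "y = t")
    case yt: True
    have zy: "z < y" using zt yt by simp
    have le: "x \<le> y" "z \<le> y" "x \<le> x" "y \<le> y" using xy zy by auto
    let ?P = "e x x" and ?Q = "e y y" and ?a = "e x y" and ?d = "e z y"
    have g: "\<phi> (gD x y z) = (?Q + ?a) + ?d" unfolding gD_def using le by simp
    have h: "\<phi> (inc_add (EE x x) (neg (EE x y))) = ?P - ?a" using le by simp
    have G: "(?P - ?a) * ((?Q + ?a) + ?d) = 0"
      using GL[OF gD_in[OF xy zy xz] c_gD[OF xy zy xz] _ c_g2[OF xy] c_gDh[OF xy zy xz] c_hgD[OF xy zy xz]] le
      unfolding g h by auto
    have PQ: "?P * ?Q = 0" using PQ0[OF xy] by simp
    have Pd: "?P * ?d = 0" using zN[OF zy, of x] xz xy by auto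
    have R: "?a * ?a = 0" "?P * ?a = ?a * ?Q" using N_rel[OF xy] by auto
    have "- (?a * ?d) = (?P - ?a) * ((?Q + ?a) + ?d)" using PQ Pd R by (simp add: algebra_simps)
    then show ?thesis using G yt by simp
  next
    case yt: False
    have le: "x \<le> y" "z \<le> t" "x \<le> x" "z \<le> z" using xy zt by auto
    let ?P = "e x x" and ?R = "e z z" and ?a = "e x y" and ?b = "e z t"
    have g: "\<phi> (inc_add (EE x x) (EE x y)) = ?P + ?a" using le by simp
    have h: "\<phi> (inc_add (EE z z) (EE z t)) = ?R + ?b" using le by simp
    have d: "x \<noteq> z" "x \<noteq> t" "y \<noteq> z" "y \<noteq> t" using xz tx yz yt by auto
    have G: "(?P + ?a) * (?R + ?b) = 0"
      using GL[OF _ c_g1[OF xy] _ c_g1[OF zt] c_disj[OF xy zt d] c_disj[OF zt xy, of ]] le d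
      unfolding g h by auto
    have PR: "?P * ?R = 0" using PP0 xz by simp
    have Pb: "?P * ?b = 0" using zN[OF zt, of x] d by auto
    have aR: "?a * ?R = 0" using zN[OF xy, of z] d by auto
    have "?a * ?b = (?P + ?a) * (?R + ?b)" using PR Pb aR by (simp add: algebra_simps)
    then show ?thesis using G by simp
  qed
qed

end

context kset begin

abbreviation "v \<equiv> bpow u (k - 2)"

definition J where
  "J a b = \<phi> (inc_mult a b) + \<phi> (inc_mult b a) - (\<phi> a * v * \<phi> b + \<phi> b * v * \<phi> a)"

lemma J_sym: "J a b = J b a" by (simp add: J_def add.commute)

lemma m1: "k - 2 \<ge> 1" and nSm: "k - 1 = Suc (k - 2)" using k3 by auto

lemma Pv: "e x x * v = bpow (e x x) (k - 1)" "v * e x x = bpow (e x x) (k - 1)"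
  using pu_pow[OF P_rel(1) m1] up_pow[OF P_rel(2) m1] nSm by auto

lemma PvP: "e x x * v * e x x = e x x"
proof -
  have "e x x * v * e x x = bpow (e x x) (k - 1) * e x x" using Pv by simp
  also have "\<dots> = bpow (e x x) k" using bpow_SucR'[of "k - 1" "e x x"] k3 by simp
  finally show ?thesis using P_kp by simp
qed

lemma N3: "x < y \<Longrightarrow> e x y = bpow (e x x) (k - 1) * e x y + e x y * bpow (e x x) (k - 1)"
  using N_pow[of x y "k - 1"] N_un[of x y] k3 by simp

lemma Nv: assumes "x < y"
  shows "e x y * v = bpow (e x x) (k - 2) * e x y + e x y * bpow (e x x) (k - 2)"
    "v * e x y = bpow (e x x) (k - 2) * e x y + e x y * bpow (e x x) (k - 2)"
proof -
  show 1: "e x y * v = bpow (e x x) (k - 2) * e x y + e x y * bpow (e x x) (k - 2)"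
    using N_pow[OF assms m1] .
  have "v * e x y = e x y * v" using bpow_shift[of u "e x y" u] uN[OF assms] by simp
  then show "v * e x y = bpow (e x x) (k - 2) * e x y + e x y * bpow (e x x) (k - 2)" using 1 by simp
qed

lemma shQ: "x < y \<Longrightarrow> bpow (e y y) j * e x y = e x y * bpow (e x x) j"
  using bpow_shift[of "e y y" "e x y" "e x x" j] N_rel by auto
lemma shP: "x < y \<Longrightarrow> bpow (e x x) j * e x y = e x y * bpow (e y y) j"
  using bpow_shift[of "e x x" "e x y" "e y y" j] N_rel by auto

lemma J_diag: "J (EE x x) (EE z z) = 0"
proof (cases "x = z")
  case True then show ?thesis using PvP[of x] by (simp add: J_def mult_EE)
next
  case False
  have "e x x * v * e z z = 0" "e z z * v * e x x = 0"
    using Pv bpow_zeroL[OF PP0[OF False]] bpow_zeroL[OF PP0[of z x]] False by (auto simp: mult.assoc)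
  then show ?thesis using False by (simp add: J_def mult_EE)
qed

lemma J_dn:
  assumes zt: "z < t"
  shows "J (EE x x) (EE z t) = 0"
proof -
  have le: "z \<le> t" using zt by simp
  consider "x = z" | "x = t" | "x \<noteq> z \<and> x \<noteq> t" by blast
  then show ?thesis
  proof cases
    case 1
    have "e x x * v * e z t = bpow (e z z) (k - 1) * e z t" "e z t * v * e x x = e z t * bpow (e z z) (k - 1)"
      using Pv[of x] 1 by (auto simp: mult.assoc)
    moreover have "t \<noteq> z" using zt by simp
    ultimately show ?thesis using 1 zt N3[OF zt] le by (simp add: J_def mult_EE)
  next
    case 2
    have "e x x * v * e z t = e z t * bpow (e z z) (k - 1)" "e z t * v * e x x = bpow (e z z) (k - 1) * e z t"
      using Pv[of x] 2 shQ[OF zt] shP[OF zt] by (auto simp: mult.assoc)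
    moreover have "t \<noteq> z" using zt by simp
    ultimately show ?thesis using 2 zt N3[OF zt] le by (simp add: J_def mult_EE add.commute)
  next
    case 3
    have z: "e x x * e z t = 0" "e z t * e x x = 0" using zN[OF zt, of x] 3 by auto
    have "e x x * v * e z t = 0" "e z t * v * e x x = 0"
      using Pv[of x] bpow_zeroL[OF z(1)] bpow_zeroR[OF z(2)] by (auto simp: mult.assoc)
    moreover have "t \<noteq> x" "z \<noteq> x" using 3 by auto
    ultimately show ?thesis using 3 zt le by (simp add: J_def mult_EE)
  qed
qed

lemma J_chain:
  assumes xy: "x < y" and yt: "y < t"
  shows "J (EE x y) (EE y t) = 0"
proof -
  have xt: "x < t" using xy yt by simp
  have le: "x \<le> y" "y \<le> t" "x \<le> t" using xy yt by auto
  let ?P = "e x x" and ?Q = "e y y" and ?a = "e x y" and ?b = "e y t" and ?c = "e x t"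
  let ?m = "k - 2"
  have ch: "?a * ?b = ?P * ?c" "?b * ?a = ?c * ?P" using chain[OF xy yt] by auto
  have QP: "bpow ?Q ?m * ?P = 0" using PQ0[OF xy] by (intro bpow_zeroL) auto
  have Qc: "bpow ?Q ?m * ?c = 0" using zN[OF xt, of y] xy yt by (intro bpow_zeroL) auto
  have PmP: "bpow ?P ?m * ?P = bpow ?P (k - 1)" using bpow_SucR'[OF m1, of ?P] nSm by simp
  have PPm: "?P * bpow ?P ?m = bpow ?P (k - 1)" using bpow_SucL[OF m1, of ?P] nSm by simp
  have avb: "?a * v * ?b = bpow ?P (k - 1) * ?c"
  proof -
    have "?a * v * ?b = bpow ?P ?m * (?a * ?b) + (?a * bpow ?P ?m) * ?b"
      using Nv(1)[OF xy] by (simp add: algebra_simps)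
    also have "?a * bpow ?P ?m = bpow ?Q ?m * ?a" using shQ[OF xy] by simp
    also have "bpow ?Q ?m * ?a * ?b = (bpow ?Q ?m * ?P) * ?c" using ch by (simp add: mult.assoc)
    also have "bpow ?P ?m * (?a * ?b) = (bpow ?P ?m * ?P) * ?c" using ch by (simp add: mult.assoc)
    finally show ?thesis using QP PmP by simp
  qed
  have bva: "?b * v * ?a = ?c * bpow ?P (k - 1)"
  proof -
    have "?b * v * ?a = bpow ?Q ?m * (?b * ?a) + ?b * (bpow ?Q ?m * ?a)"
      using Nv(1)[OF yt] by (simp add: algebra_simps)
    also have "bpow ?Q ?m * ?a = ?a * bpow ?P ?m" using shQ[OF xy] by simp
    also have "?b * (?a * bpow ?P ?m) = ?c * (?P * bpow ?P ?m)" using ch by (simp add: mult.assoc[symmetric])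
    also have "bpow ?Q ?m * (?b * ?a) = (bpow ?Q ?m * ?c) * ?P" using ch by (simp add: mult.assoc)
    finally show ?thesis using Qc PPm by simp
  qed
  have "t \<noteq> x" using xt by simp
  then show ?thesis using avb bva N3[OF xt] le by (simp add: J_def mult_EE)
qed

lemma J_zero:
  assumes xy: "x < y" and zt: "z < t" and yz: "y \<noteq> z" and tx: "t \<noteq> x"
  shows "J (EE x y) (EE z t) = 0"
proof -
  have le: "x \<le> y" "z \<le> t" using xy zt by auto
  have ab: "e x y * e z t = 0" using zero_prod[OF xy zt yz tx] .
  have ba: "e z t * e x y = 0" using zero_prod[OF zt xy tx yz] .
  have avb: "e x y * v * e z t = 0"
  proof -
    have "e x y * v * e z t = bpow (e x x) (k - 2) * (e x y * e z t) + (e x y * bpow (e x x) (k - 2)) * e z t"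
      using Nv(1)[OF xy] by (simp add: algebra_simps)
    also have "e x y * bpow (e x x) (k - 2) = bpow (e y y) (k - 2) * e x y" using shQ[OF xy] by simp
    finally show ?thesis using ab by (simp add: mult.assoc)
  qed
  have bva: "e z t * v * e x y = 0"
  proof -
    have "e z t * v * e x y = bpow (e z z) (k - 2) * (e z t * e x y) + (e z t * bpow (e z z) (k - 2)) * e x y"
      using Nv(1)[OF zt] by (simp add: algebra_simps)
    also have "e z t * bpow (e z z) (k - 2) = bpow (e t t) (k - 2) * e z t" using shQ[OF zt] by simp
    finally show ?thesis using ba by (simp add: mult.assoc)
  qed
  show ?thesis using avb bva le yz tx by (simp add: J_def mult_EE)
qed

lemma J_basis:
  assumes "x \<le> y" "z \<le> t"
  shows "J (EE x y) (EE z t) = 0"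
proof (cases "x = y")
  case True
  show ?thesis
  proof (cases "z = t")
    case True then show ?thesis using \<open>x = y\<close> J_diag by simp
  next
    case False then show ?thesis using \<open>x = y\<close> J_dn assms by simp
  qed
next
  case xy: False
  then have xy': "x < y" using assms by simp
  show ?thesis
  proof (cases "z = t")
    case True then show ?thesis using J_dn[OF xy'] J_sym by metis
  next
    case False
    then have zt: "z < t" using assms by simp
    consider "y = z" | "t = x" | "y \<noteq> z \<and> t \<noteq> x" by blast
    then show ?thesis
    proof cases
      case 1 then show ?thesis using J_chain[OF xy'] zt by simp
    next
      case 2 then show ?thesis using J_chain[OF zt] xy' J_sym by metis
    next
      case 3 then show ?thesis using J_zero[OF xy' zt] by simp
    qed
  qed
qed

end

definition restr :: "('x \<times> 'x) set \<Rightarrow> ('x \<Rightarrow> 'x \<Rightarrow> 'f::field) \<Rightarrow> 'x \<Rightarrow> 'x \<Rightarrow> 'f" where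
  "restr S a = (\<lambda>i j. if (i, j) \<in> S then a i j else 0)"

context kset begin

lemma lin_ext:
  fixes L :: "('x \<Rightarrow> 'x \<Rightarrow> 'f) \<Rightarrow> 'b"
  assumes Ladd: "\<And>f g. f \<in> IA \<Longrightarrow> g \<in> IA \<Longrightarrow> L (inc_add f g) = L f + L g"
    and Lsm: "\<And>c f. f \<in> IA \<Longrightarrow> L (inc_smult c f) = sm c (L f)"
    and Lb: "\<And>x y. x \<le> y \<Longrightarrow> L (EE x y) = 0"
    and a: "a \<in> IA"
  shows "L a = 0"
proof -
  have LZ: "L Zi = 0"
  proof -
    have "inc_smult 0 Zi = (Zi :: 'x \<Rightarrow> 'x \<Rightarrow> 'f)" by (simp add: inc_smult_def Zi_def)
    then have "L Zi = sm 0 (L Zi)" using Lsm[of Zi 0] by simp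
    then show ?thesis by simp
  qed
  have rin: "S \<subseteq> {(x, y). x \<le> y} \<Longrightarrow> restr S a \<in> IA" for S
    by (auto simp: restr_def incidence_alg_def)
  have main: "finite S \<Longrightarrow> S \<subseteq> {(x, y). x \<le> y} \<Longrightarrow> L (restr S a) = 0" for S
  proof (induction S rule: finite_induct)
    case empty
    have "restr {} a = Zi" by (simp add: restr_def Zi_def fun_eq_iff)
    then show ?case using LZ by simp
  next
    case (insert p S)
    obtain x y where p: "p = (x, y)" by (cases p)
    have xy: "x \<le> y" using insert p by auto
    have "restr (insert p S) a = inc_add (restr S a) (inc_smult (a x y) (EE x y))"
      using insert p by (auto simp: restr_def inc_add_def inc_smult_def EE_def fun_eq_iff)
    moreover have "L (inc_add (restr S a) (inc_smult (a x y) (EE x y))) = 0"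
      using insert xy rin Ladd Lsm Lb by simp
    ultimately show ?case by simp
  qed
  have "restr {(x, y). x \<le> y} a = a" using a by (auto simp: restr_def incidence_alg_def fun_eq_iff)
  then show ?thesis using main[of "{(x, y). x \<le> y}"] by simp
qed

lemma J_linL:
  assumes "f \<in> IA" "g \<in> IA" "b \<in> IA"
  shows "J (inc_add f g) b = J f b + J g b" "J (inc_smult c f) b = sm c (J f b)"
  using assms by (simp_all add: J_def mult_addL mult_addR mult_smultL mult_smultR algebra_simps
     sm_multL sm_multR vs.scale_right_distrib vs.scale_right_diff_distrib)

lemma J_linR:
  assumes "f \<in> IA" "g \<in> IA" "b \<in> IA"
  shows "J b (inc_add f g) = J b f + J b g" "J b (inc_smult c f) = sm c (J b f)"
  using assms by (simp_all add: J_def mult_addL mult_addR mult_smultL mult_smultR algebra_simps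
     sm_multL sm_multR vs.scale_right_distrib vs.scale_right_diff_distrib)

lemma J0: assumes "a \<in> IA" "b \<in> IA" shows "J a b = 0"
proof -
  have 1: "J (EE x y) b = 0" if "x \<le> y" "b \<in> IA" for x y b
    by (rule lin_ext[where L = "\<lambda>b. J (EE x y) b"]) (use that J_linR J_basis in auto)
  show ?thesis
    by (rule lin_ext[where L = "\<lambda>a. J a b"]) (use assms J_linL 1 in auto)
qed

end

context kset begin

lemma G1: "a \<in> IA \<Longrightarrow> u * \<phi> a = \<phi> a * u"
proof -
  assume a: "a \<in> IA"
  have "u * \<phi> a - \<phi> a * u = 0"
  proof (rule lin_ext[where L = "\<lambda>a. u * \<phi> a - \<phi> a * u"])
    fix x y :: 'x assume xy: "x \<le> y"
    show "u * e x y - e x y * u = 0"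
    proof (cases "x = y")
      case True then show ?thesis using P_rel[of x] by simp
    next
      case False then show ?thesis using uN[of x y] xy by simp
    qed
  qed (use a in \<open>simp_all add: algebra_simps sm_multL sm_multR vs.scale_right_diff_distrib\<close>)
  then show ?thesis by simp
qed

lemma G2: "a \<in> IA \<Longrightarrow> bpow u (k - 1) * \<phi> a * bpow u (k - 1) = \<phi> a"
proof -
  assume a: "a \<in> IA"
  have "bpow u (k - 1) * \<phi> a * bpow u (k - 1) - \<phi> a = 0"
  proof (rule lin_ext[where L = "\<lambda>a. bpow u (k - 1) * \<phi> a * bpow u (k - 1) - \<phi> a"])
    fix x y :: 'x assume xy: "x \<le> y"
    show "bpow u (k - 1) * e x y * bpow u (k - 1) - e x y = 0"
    proof (cases "x = y")
      case True then show ?thesis using kpow_id[OF P_rel P_kp, of x] by simp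
    next
      case False then show ?thesis using N_un[of x y] xy by simp
    qed
  qed (use a in \<open>simp_all add: algebra_simps sm_multL sm_multR vs.scale_right_diff_distrib\<close>)
  then show ?thesis by simp
qed

lemma G3: "a \<in> IA \<Longrightarrow> \<phi> (inc_mult a a) = \<phi> a * v * \<phi> a"
proof -
  assume a: "a \<in> IA"
  have "J a a = 0" using J0[OF a a] .
  then have "(\<phi> (inc_mult a a) - \<phi> a * v * \<phi> a) + (\<phi> (inc_mult a a) - \<phi> a * v * \<phi> a) = 0"
    by (simp add: J_def algebra_simps)
  then have "\<phi> (inc_mult a a) - \<phi> a * v * \<phi> a = 0" by (rule dbl)
  then show ?thesis by simp
qed

lemma G4:
  assumes a: "a \<in> IA" and b: "b \<in> IA"
  shows "\<phi> (inc_mult (inc_mult a b) a) = \<phi> a * v * \<phi> b * v * \<phi> a"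
proof -
  let ?A = "\<phi> a" and ?B = "\<phi> b" and ?D = "\<phi> (inc_mult (inc_mult a b) a)"
  let ?o = "inc_add (inc_mult a b) (inc_mult b a)"
  have oin: "?o \<in> IA" by simp
  have po: "\<phi> ?o = ?A * v * ?B + ?B * v * ?A" using J0[OF a b] by (simp add: J_def)
  have j1: "\<phi> (inc_mult a ?o) + \<phi> (inc_mult ?o a) = ?A * v * \<phi> ?o + \<phi> ?o * v * ?A"
    using J0[OF a oin] by (simp add: J_def)
  have l1: "\<phi> (inc_mult a ?o) = \<phi> (inc_mult (inc_mult a a) b) + ?D"
    by (simp add: mult_addR mult_assoc)
  have l2: "\<phi> (inc_mult ?o a) = ?D + \<phi> (inc_mult b (inc_mult a a))"
    by (simp add: mult_addL mult_assoc)
  have aa: "inc_mult a a \<in> IA" by simp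
  have j2: "\<phi> (inc_mult (inc_mult a a) b) + \<phi> (inc_mult b (inc_mult a a))
      = (?A * v * ?A) * v * ?B + ?B * v * (?A * v * ?A)"
    using J0[OF aa b] G3[OF a] by (simp add: J_def)
  let ?T = "\<phi> (inc_mult (inc_mult a a) b) + \<phi> (inc_mult b (inc_mult a a))"
  have e: "(?D + ?D) + ?T = ?A * v * \<phi> ?o + \<phi> ?o * v * ?A"
    using j1 unfolding l1 l2 by (simp add: algebra_simps)
  have "?D + ?D = ?A * v * \<phi> ?o + \<phi> ?o * v * ?A - ?T" using e by (simp add: eq_diff_eq)
  also have "\<dots> = ?A * v * ?B * v * ?A + ?A * v * ?B * v * ?A"
    unfolding j2 po by (simp add: algebra_simps)
  finally have "(?D - ?A * v * ?B * v * ?A) + (?D - ?A * v * ?B * v * ?A) = 0"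
    by (simp add: algebra_simps)
  then have "?D - ?A * v * ?B * v * ?A = 0" by (rule dbl)
  then show ?thesis by simp
qed

end

theorem lemma7p3:
  fixes k :: nat
    and \<phi> :: "('x::{order,finite} \<Rightarrow> 'x \<Rightarrow> 'f::field) \<Rightarrow> 'b::ring"
    and sm :: "'f \<Rightarrow> 'b \<Rightarrow> 'b"
  assumes "k \<ge> 3"
    and "\<exists>w::'f. primitive_root_of_unity (k - 1) w"
    and "of_nat k \<noteq> (0::'f)"
    and "F_algebra sm"
    and "\<forall>f\<in>incidence_alg. \<forall>g\<in>incidence_alg. \<phi> (inc_add f g) = \<phi> f + \<phi> g"
    and "\<forall>c. \<forall>f\<in>incidence_alg. \<phi> (inc_smult c f) = sm c (\<phi> f)"
    and "\<phi> ` Pk_inc k \<subseteq> Pk k"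
  shows "(\<forall>a\<in>incidence_alg. \<phi> inc_delta * \<phi> a = \<phi> a * \<phi> inc_delta)
       \<and> (\<forall>a\<in>incidence_alg. \<exists>b. \<phi> a = bpow (\<phi> inc_delta) (k - 1) * b * bpow (\<phi> inc_delta) (k - 1))
       \<and> (\<forall>a\<in>incidence_alg.
            \<phi> (inc_mult a a) = \<phi> a * bpow (\<phi> inc_delta) (k - 2) * \<phi> a)
       \<and> (\<forall>a\<in>incidence_alg. \<forall>b\<in>incidence_alg.
            \<phi> (inc_mult (inc_mult a b) a) =
              \<phi> a * bpow (\<phi> inc_delta) (k - 2) * \<phi> b * bpow (\<phi> inc_delta) (k - 2) * \<phi> a)"
proof -
  obtain w :: 'f where pr: "primitive_root_of_unity (k - 1) w" using assms(2) by blast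
  interpret K: kset sm k \<phi> w
    by (unfold_locales) (use assms pr in auto)
  show ?thesis
    using K.G1 K.G2 K.G3 K.G4 by metis
qed

end
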